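(* Let $S=G\times E$ be a right group with $G$ an infinite group and $E$ a right zero semigroup, and let $T$ be a subsemigroup of $S$ of finite Green index. Then $T=H\times E$ for some subgroup $H$ of finite index in $G$; in particular $T$ is a right group.
   Context: A right zero semigroup is a semigroup $E$ with $ef=f$ for all $e,f\in E$; a right group is a direct product $G\times E$ of a group and a right zero semigroup, with componentwise multiplication $(g,e)(h,f)=(gh,f)$. For a subsemigroup $T$ of a semigroup $S$, the relative Green's relations on $S$ are: $u\,\mathcal{R}^T v$ iff $uT^1=vT^1$, $u\,\mathcal{L}^T v$ iff $T^1u=T^1v$, and $\mathcal{H}^T=\mathcal{R}^T\cap\mathcal{L}^T$, where $T^1=T\cup\{1\}$. The Green index of $T$ in $S$ is one plus the number of $\mathcal{H}^T$-classes contained in $S\setminus T$. *)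

theory Defs
  imports "HOL-Algebra.Coset"
begin

text \<open>Multiplication of the right group G x E: (g,e)(h,f) = (gh, f).
  The right zero semigroup E is given by its underlying set; its product is e f = f.\<close>
definition rg_mult :: "('g, 'm) monoid_scheme \<Rightarrow> 'g \<times> 'e \<Rightarrow> 'g \<times> 'e \<Rightarrow> 'g \<times> 'e" where
  "rg_mult G x y = (fst x \<otimes>\<^bsub>G\<^esub> fst y, snd y)"

definition subsemigroup :: "('a \<Rightarrow> 'a \<Rightarrow> 'a) \<Rightarrow> 'a set \<Rightarrow> 'a set \<Rightarrow> bool" where
  "subsemigroup m S T \<longleftrightarrow> T \<subseteq> S \<and> (\<forall>x\<in>T. \<forall>y\<in>T. m x y \<in> T)"

definition right_ideal1 :: "('a \<Rightarrow> 'a \<Rightarrow> 'a) \<Rightarrow> 'a set \<Rightarrow> 'a \<Rightarrow> 'a set" where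
  "right_ideal1 m T u = insert u ((\<lambda>t. m u t) ` T)"

definition left_ideal1 :: "('a \<Rightarrow> 'a \<Rightarrow> 'a) \<Rightarrow> 'a set \<Rightarrow> 'a \<Rightarrow> 'a set" where
  "left_ideal1 m T u = insert u ((\<lambda>t. m t u) ` T)"

definition rel_R :: "('a \<Rightarrow> 'a \<Rightarrow> 'a) \<Rightarrow> 'a set \<Rightarrow> 'a \<Rightarrow> 'a \<Rightarrow> bool" where
  "rel_R m T u v \<longleftrightarrow> right_ideal1 m T u = right_ideal1 m T v"

definition rel_L :: "('a \<Rightarrow> 'a \<Rightarrow> 'a) \<Rightarrow> 'a set \<Rightarrow> 'a \<Rightarrow> 'a \<Rightarrow> bool" where
  "rel_L m T u v \<longleftrightarrow> left_ideal1 m T u = left_ideal1 m T v"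

definition rel_H :: "('a \<Rightarrow> 'a \<Rightarrow> 'a) \<Rightarrow> 'a set \<Rightarrow> 'a \<Rightarrow> 'a \<Rightarrow> bool" where
  "rel_H m T u v \<longleftrightarrow> rel_R m T u v \<and> rel_L m T u v"

definition H_classes :: "('a \<Rightarrow> 'a \<Rightarrow> 'a) \<Rightarrow> 'a set \<Rightarrow> 'a set \<Rightarrow> 'a set set" where
  "H_classes m S T = {{v \<in> S. rel_H m T u v} | u. u \<in> S}"

definition outer_H_classes :: "('a \<Rightarrow> 'a \<Rightarrow> 'a) \<Rightarrow> 'a set \<Rightarrow> 'a set \<Rightarrow> 'a set set" where
  "outer_H_classes m S T = {C \<in> H_classes m S T. C \<subseteq> S - T}"

definition finite_green_index :: "('a \<Rightarrow> 'a \<Rightarrow> 'a) \<Rightarrow> 'a set \<Rightarrow> 'a set \<Rightarrow> bool" where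
  "finite_green_index m S T \<longleftrightarrow> finite (outer_H_classes m S T)"

definition green_index :: "('a \<Rightarrow> 'a \<Rightarrow> 'a) \<Rightarrow> 'a set \<Rightarrow> 'a set \<Rightarrow> nat" where
  "green_index m S T = Suc (card (outer_H_classes m S T))"

end

theory Submission imports Defs begin

lemma (in group) lemA:
  assumes inf: "infinite (carrier G)" and Qc: "Q \<subseteq> carrier G"
    and Qm: "\<And>x y. x \<in> Q \<Longrightarrow> y \<in> Q \<Longrightarrow> x \<otimes> y \<in> Q"
    and F: "finite F" "F \<subseteq> carrier G"
    and cov: "\<And>x. x \<in> carrier G \<Longrightarrow> x \<notin> Q \<Longrightarrow>
        \<exists>f\<in>F. \<exists>k. x = f \<otimes> k \<and> (k = \<one> \<or> (k \<in> Q \<and> inv k \<in> Q))"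
  shows "subgroup Q G \<and> finite (rcosets Q)"
proof -
  have cov2: "\<exists>f\<in>F. \<exists>k\<in>Q. inv k \<in> Q \<and> x = f \<otimes> k" if one: "\<one> \<in> Q" and x: "x \<in> carrier G" "x \<notin> Q" for x
  proof -
    obtain f k where "f \<in> F" "x = f \<otimes> k" "k = \<one> \<or> (k \<in> Q \<and> inv k \<in> Q)" using cov[OF x] by blast
    then show ?thesis using one by (metis inv_one)
  qed
  have one: "\<one> \<in> Q"
  proof (rule ccontr)
    assume n1: "\<one> \<notin> Q"
    have "\<not> (\<exists>k\<in>Q. inv k \<in> Q)"
      using n1 Qm Qc by (metis r_inv subsetD)
    hence sub: "carrier G - Q \<subseteq> F"
    proof -
      assume nk: "\<not> (\<exists>k\<in>Q. inv k \<in> Q)"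
      show ?thesis
      proof
        fix x assume x: "x \<in> carrier G - Q"
        then obtain f k where f: "f \<in> F" "x = f \<otimes> k" "k = \<one> \<or> (k \<in> Q \<and> inv k \<in> Q)"
          using cov by blast
        then have "k = \<one>" using nk by blast
        then show "x \<in> F" using f F x by auto
      qed
    qed
    have "carrier G \<subseteq> F \<union> (\<lambda>z. inv z) ` F"
    proof
      fix x assume x: "x \<in> carrier G"
      show "x \<in> F \<union> (\<lambda>z. inv z) ` F"
      proof (cases "x \<in> Q")
        case True
        then have "inv x \<notin> Q" using \<open>\<not> (\<exists>k\<in>Q. inv k \<in> Q)\<close> by blast
        then have "inv x \<in> F" using sub x by auto
        then have "inv (inv x) \<in> (\<lambda>z. inv z) ` F" by blast
        then show ?thesis using x by simp
      next
        case False then show ?thesis using sub x by auto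
      qed
    qed
    then show False using inf F(1) by (meson finite_Un finite_imageI finite_subset)
  qed
  have pw: "x [^] (n::nat) \<in> Q" if "x \<in> Q" for x n
    using that by (induction n) (auto simp: one Qm)
  have invQ: "inv x \<in> Q" if xQ: "x \<in> Q" for x
  proof (rule ccontr)
    assume nx: "inv x \<notin> Q"
    have xc: "x \<in> carrier G" using xQ Qc by auto
    define y where "y = inv x"
    have yc: "y \<in> carrier G" using xc y_def by simp
    have ny: "y [^] n \<notin> Q" if "n \<ge> 1" for n :: nat
    proof
      assume yn: "y [^] n \<in> Q"
      have "x [^] (n - 1) \<otimes> y [^] n = y"
      proof -
        have "y [^] n = y [^] (n-1) \<otimes> y" using that yc
          by (metis Suc_diff_1 less_le_trans nat_pow_Suc zero_less_one)
        moreover have "x [^] (n - 1) \<otimes> y [^] (n-1) = \<one>"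
          using xc y_def by (simp add: nat_pow_inv nat_pow_closed)
        ultimately show ?thesis using xc yc
          by (metis m_assoc nat_pow_closed l_one)
      qed
      moreover have "x [^] (n - 1) \<otimes> y [^] n \<in> Q" using Qm pw xQ yn by blast
      ultimately show False using nx y_def by simp
    qed
    have "\<forall>n\<in>{1::nat..}. \<exists>f\<in>F. \<exists>k\<in>Q. inv k \<in> Q \<and> y [^] n = f \<otimes> k"
      using cov2[OF one] ny yc by auto
    then obtain fn kn where fk: "\<And>n::nat. n \<ge> 1 \<Longrightarrow> fn n \<in> F \<and> kn n \<in> Q \<and> inv (kn n) \<in> Q \<and> y [^] n = fn n \<otimes> kn n"
      by (simp add: Ball_def) metis
    have "\<not> inj_on fn {1..}"
    proof
      assume "inj_on fn {1::nat..}"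
      moreover have "finite (fn ` {1..})" using fk F(1) by (meson atLeast_iff finite_subset image_subsetI)
      ultimately show False using finite_imageD by (metis infinite_Ici)
    qed
    then obtain a b :: nat where ab: "a \<ge> 1" "b \<ge> 1" "a \<noteq> b" "fn a = fn b"
      unfolding inj_on_def by auto
    then obtain n m :: nat where nm: "n \<ge> 1" "n < m" "fn n = fn m"
      by (metis linorder_neqE_nat order.trans less_imp_le)
    have m1: "m \<ge> 1" using nm by auto
    let ?f = "fn n"
    have fc: "?f \<in> carrier G" using fk[OF nm(1)] F by auto
    have kc: "kn n \<in> carrier G" "kn m \<in> carrier G" using fk[OF nm(1)] fk[OF m1] Qc by auto
    have e1: "y [^] n = ?f \<otimes> kn n" using fk[OF nm(1)] by simp
    have e2: "y [^] m = ?f \<otimes> kn m" using fk[OF m1] nm by simp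
    have "y [^] m = y [^] n \<otimes> y [^] (m - n)" using nm yc
      by (metis le_add_diff_inverse less_imp_le nat_pow_mult)
    hence "?f \<otimes> kn m = ?f \<otimes> kn n \<otimes> y [^] (m - n)" using e1 e2 by simp
    hence "kn m = kn n \<otimes> y [^] (m - n)" using fc kc yc
      by (metis m_assoc nat_pow_closed m_closed Units_l_cancel Units_eq)
    hence "y [^] (m - n) = inv (kn n) \<otimes> kn m" using kc yc
      by (metis inv_solve_left nat_pow_closed)
    moreover have "inv (kn n) \<otimes> kn m \<in> Q" using fk[OF nm(1)] fk[OF m1] Qm by blast
    moreover have "m - n \<ge> 1" using nm by simp
    ultimately show False using ny by metis
  qed
  have sg: "subgroup Q G"
    by (rule subgroupI) (use Qc one Qm invQ in auto)
  have "rcosets Q \<subseteq> insert Q ((\<lambda>f. Q #> inv f) ` F)"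
  proof
    fix C assume "C \<in> rcosets Q"
    then obtain a where a: "a \<in> carrier G" "C = Q #> a" unfolding RCOSETS_def by auto
    show "C \<in> insert Q ((\<lambda>f. Q #> inv f) ` F)"
    proof (cases "inv a \<in> Q")
      case True
      then have "a \<in> Q" using invQ a by (metis inv_inv)
      then show ?thesis using a sg by (simp add: coset_join2)
    next
      case False
      then obtain f k where fk: "f \<in> F" "k \<in> Q" "inv k \<in> Q" "inv a = f \<otimes> k"
        using cov2[OF one, of "inv a"] a by auto
      have fc: "f \<in> carrier G" "k \<in> carrier G" using fk F Qc by auto
      have "a = inv k \<otimes> inv f" using fk fc a
        by (metis inv_inv inv_mult_group)
      hence "a \<in> Q #> inv f" using fk fc unfolding r_coset_def by auto
      hence "Q #> a = Q #> inv f" using sg fc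
        by (metis repr_independence inv_closed)
      then show ?thesis using a fk by auto
    qed
  qed
  then have "finite (rcosets Q)" using F(1) by (meson finite.insertI finite_imageI finite_subset)
  then show ?thesis using sg by simp
qed

lemma (in group) main_aux:
  fixes E :: "'e set" and T :: "('a \<times> 'e) set"
  assumes "True"
    and "infinite (carrier G)"
    and "subsemigroup (rg_mult G) (carrier G \<times> E) T"
    and "finite_green_index (rg_mult G) (carrier G \<times> E) T"
  shows "\<exists>H. subgroup H G \<and> finite (rcosets\<^bsub>G\<^esub> H) \<and> T = H \<times> E"
proof -
  let ?m = "rg_mult G" and ?S = "carrier G \<times> E"
  have TS: "T \<subseteq> ?S" and Tm: "\<And>x y. x \<in> T \<Longrightarrow> y \<in> T \<Longrightarrow> ?m x y \<in> T"
    using assms(3) unfolding subsemigroup_def by auto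
  have mult: "\<And>g e h f. rg_mult G (g, e) (h, f) = (g \<otimes> h, f)" by (simp add: rg_mult_def)
  define Q where "Q e = {g. (g, e) \<in> T}" for e
  define OC where "OC = outer_H_classes ?m ?S T"
  have finO: "finite OC" using assms(4) unfolding finite_green_index_def OC_def by simp
  define rep where "rep C = (SOME u. u \<in> ?S \<and> C = {v \<in> ?S. rel_H ?m T u v})" for C
  have rep: "rep C \<in> ?S \<and> C = {v \<in> ?S. rel_H ?m T (rep C) v}" if "C \<in> OC" for C
  proof -
    have "\<exists>u. u \<in> ?S \<and> C = {v \<in> ?S. rel_H ?m T u v}"
      using that unfolding OC_def outer_H_classes_def H_classes_def by blast
    then show ?thesis unfolding rep_def by (rule someI_ex)
  qed
  define F where "F = (\<lambda>C. fst (rep C)) ` OC"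
  have F: "finite F" "F \<subseteq> carrier G" using finO rep unfolding F_def by (auto simp: mem_Times_iff)
  have col: "subgroup (Q e) G \<and> finite (rcosets (Q e))" if e: "e \<in> E" for e
  proof (rule lemA[OF assms(2)])
    show "Q e \<subseteq> carrier G" using TS unfolding Q_def by auto
    show "\<And>x y. x \<in> Q e \<Longrightarrow> y \<in> Q e \<Longrightarrow> x \<otimes> y \<in> Q e"
      unfolding Q_def using Tm mult by (metis mem_Collect_eq)
    show "finite F" "F \<subseteq> carrier G" by (fact F)+
    fix x assume x: "x \<in> carrier G" "x \<notin> Q e"
    hence xT: "(x, e) \<notin> T" unfolding Q_def by simp
    have xS: "(x, e) \<in> ?S" using x e by simp
    define C where "C = {v \<in> ?S. rel_H ?m T (x, e) v}"
    have "C \<in> OC"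
    proof -
      have "C \<in> H_classes ?m ?S T" unfolding C_def H_classes_def using xS by blast
      moreover have "C \<subseteq> ?S - T"
      proof
        fix v assume v: "v \<in> C"
        have "v \<notin> T"
        proof
          assume vT: "v \<in> T"
          have "right_ideal1 ?m T (x, e) = right_ideal1 ?m T v"
            using v unfolding C_def rel_H_def rel_R_def by simp
          then have "(x, e) \<in> right_ideal1 ?m T v" unfolding right_ideal1_def by auto
          then have "(x, e) \<in> T" unfolding right_ideal1_def using vT Tm by (metis (no_types, lifting) image_iff insert_iff)
          then show False using xT by simp
        qed
        then show "v \<in> ?S - T" using v unfolding C_def by simp
      qed
      ultimately show ?thesis unfolding OC_def outer_H_classes_def by simp
    qed
    let ?u = "rep C"
    have u: "?u \<in> ?S" "C = {v \<in> ?S. rel_H ?m T ?u v}" using rep[OF \<open>C \<in> OC\<close>] by auto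
    have "(x, e) \<in> C" unfolding C_def rel_H_def rel_R_def rel_L_def using xS by simp
    then have H: "rel_H ?m T ?u (x, e)" using u by (metis (no_types, lifting) mem_Collect_eq)
    have fu: "fst ?u \<in> F" unfolding F_def using \<open>C \<in> OC\<close> by blast
    obtain g0 e0 where ug: "?u = (g0, e0)" by (cases ?u)
    have R: "right_ideal1 ?m T (g0, e0) = right_ideal1 ?m T (x, e)"
      and L: "left_ideal1 ?m T (g0, e0) = left_ideal1 ?m T (x, e)"
      using H ug unfolding rel_H_def rel_R_def rel_L_def by auto
    show "\<exists>f\<in>F. \<exists>k. x = f \<otimes> k \<and> (k = \<one> \<or> (k \<in> Q e \<and> inv k \<in> Q e))"
    proof (cases "(x, e) = (g0, e0)")
      case True
      then show ?thesis using fu ug x by (intro bexI[of _ g0] exI[of _ \<one>]) auto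
    next
      case False
      have g0c: "g0 \<in> carrier G" using u ug by auto
      have "(x, e) \<in> left_ideal1 ?m T (g0, e0)" using L unfolding left_ideal1_def by auto
      then have "e0 = e" using False unfolding left_ideal1_def by (auto simp: mult)
      have "(x, e) \<in> right_ideal1 ?m T (g0, e0)" using R unfolding right_ideal1_def by auto
      then obtain k where k: "(k, e) \<in> T" "x = g0 \<otimes> k"
        using False unfolding right_ideal1_def by (auto simp: mult)
      have "(g0, e0) \<in> right_ideal1 ?m T (x, e)" using R unfolding right_ideal1_def by auto
      then obtain k' where k': "(k', e) \<in> T" "g0 = x \<otimes> k'"
        using False \<open>e0 = e\<close> unfolding right_ideal1_def by (auto simp: mult)
      have kc: "k \<in> carrier G" "k' \<in> carrier G" using k k' TS by auto
      have "x = x \<otimes> (k' \<otimes> k)" using k k' kc x g0c by (simp add: m_assoc)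
      hence "k' \<otimes> k = \<one>" using x kc by (metis l_cancel_one' m_closed)
      hence "inv k = k'" using kc by (metis inv_equality)
      then show ?thesis using k k' fu ug unfolding Q_def by (intro bexI[of _ g0] exI[of _ k]) auto
    qed
  qed
  show ?thesis
  proof (cases "E = {}")
    case True
    then have "T = {}" using TS by auto
    moreover have "subgroup (carrier G) G" by (rule subgroup_self)
    moreover have "finite (rcosets (carrier G))"
    proof -
      have "rcosets (carrier G) \<subseteq> {carrier G}" unfolding RCOSETS_def
        using coset_join2 subgroup_self by auto
      then show ?thesis by (meson finite.emptyI finite.insertI finite_subset)
    qed
    ultimately show ?thesis using True by blast
  next
    case False
    then obtain e0 where e0: "e0 \<in> E" by blast
    have eqQ: "Q e \<subseteq> Q f" if "e \<in> E" "f \<in> E" for e f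
    proof
      fix g assume g: "g \<in> Q e"
      have "\<one> \<in> Q f" using col[OF that(2)] subgroup.one_closed by fastforce
      then have "?m (g, e) (\<one>, f) \<in> T" using g Tm unfolding Q_def by auto
      moreover have "g \<in> carrier G" using g TS unfolding Q_def by auto
      ultimately show "g \<in> Q f" unfolding Q_def by (simp add: mult)
    qed
    have "T = Q e0 \<times> E"
    proof
      show "T \<subseteq> Q e0 \<times> E"
      proof
        fix p assume p: "p \<in> T"
        obtain g e where pe: "p = (g, e)" by (cases p)
        have "e \<in> E" using p pe TS by auto
        then show "p \<in> Q e0 \<times> E" using eqQ[OF \<open>e \<in> E\<close> e0] p pe unfolding Q_def by auto
      qed
      show "Q e0 \<times> E \<subseteq> T"
        using eqQ[OF e0] unfolding Q_def by auto
    qed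
    then show ?thesis using col[OF e0] by blast
  qed
qed

theorem mainTheorem15:
  fixes G :: "('g, 'm) monoid_scheme" and E :: "'e set" and T :: "('g \<times> 'e) set"
  assumes "group G"
    and "infinite (carrier G)"
    and "subsemigroup (rg_mult G) (carrier G \<times> E) T"
    and "finite_green_index (rg_mult G) (carrier G \<times> E) T"
  shows "\<exists>H. subgroup H G \<and> finite (rcosets\<^bsub>G\<^esub> H) \<and> T = H \<times> E"
  using group.main_aux[OF assms(1) TrueI assms(2-4)] .

end
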